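(* Let $n\ge1$ and let $f:I^n\to\mathbb{R}$ be a bounded function. Let $x=(x_1,\ldots,x_n)\in(0,1)^n$ be a point at which $f$ is (Fréchet) differentiable. Then for each $k=1,\ldots,n$, $$\lim_{m\to\infty}\frac{\partial\,\mathscr{B}^n_m(f)}{\partial x_k}(x)=\frac{\partial f}{\partial x_k}(x).$$
   Context: $I=[0,1]$. $b_{i,m}(t)=\binom{m}{i}t^i(1-t)^{m-i}$, $B^n_{i,m}(x)=\prod_k b_{i_k,m}(x_k)$ for $i\in\{0,\ldots,m\}^n$, and $\mathscr{B}^n_m(f)=\sum_i f(\tfrac{i}{m})B^n_{i,m}$ with $\tfrac im=(\tfrac{i_1}{m},\ldots,\tfrac{i_n}{m})$. *)

theory Defs
  imports "HOL-Analysis.Analysis"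
begin

text \<open>Multivariate Bernstein operator on the unit cube I^n, the dimension n being
the cardinality of the finite index type 'n.\<close>

definition multi_bernstein :: "nat \<Rightarrow> (real^'n::finite \<Rightarrow> real) \<Rightarrow> real^'n \<Rightarrow> real" where
  "multi_bernstein m f x =
     (\<Sum>i \<in> {i::'n \<Rightarrow> nat. \<forall>k. i k \<le> m}.
        f (\<chi> k. real (i k) / real m) * (\<Prod>k\<in>UNIV. Bernstein m (i k) (x $ k)))"

definition partial_deriv :: "(real^'n::finite \<Rightarrow> real) \<Rightarrow> 'n \<Rightarrow> real^'n \<Rightarrow> real" where
  "partial_deriv g k x = deriv (\<lambda>t. g (x + t *\<^sub>R axis k 1)) 0"

end

theory Submission
  imports Defs
begin


lemma sum_choose_Bernstein:
  "(\<Sum>t\<le>m. real (t choose r) * Bernstein m t x) = real (m choose r) * x^r"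
proof (cases "r \<le> m")
  case False
  then show ?thesis by (auto intro!: sum.neutral simp: binomial_eq_0)
next
  case True
  have "(\<Sum>t\<le>m. real (t choose r) * Bernstein m t x) = (\<Sum>t\<in>{r..m}. real (t choose r) * Bernstein m t x)"
    by (rule sum.mono_neutral_right) (auto simp: binomial_eq_0)
  also have "\<dots> = (\<Sum>t\<in>{r..m}. real (m choose r) * x^r * Bernstein (m-r) (t-r) x)"
  proof (rule sum.cong[OF refl])
    fix t assume t: "t \<in> {r..m}"
    have c: "(m choose t) * (t choose r) = (m choose r) * ((m-r) choose (t-r))"
      using choose_mult[of r t m] t by auto
    have p: "x^t = x^r * x^(t-r)" using t by (simp flip: power_add)
    have q: "m - r - (t - r) = m - t" using t by auto
    show "real (t choose r) * Bernstein m t x = real (m choose r) * x^r * Bernstein (m-r) (t-r) x"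
      unfolding Bernstein_def q p
      using arg_cong[OF c, of real] by (simp only: of_nat_mult) (simp add: algebra_simps)
  qed
  also have "\<dots> = (\<Sum>s\<in>{0..m-r}. real (m choose r) * x^r * Bernstein (m-r) s x)"
    using sum.shift_bounds_cl_nat_ivl[of "\<lambda>t. real (m choose r) * x^r * Bernstein (m-r) (t-r) x" 0 r "m-r"] True
    by simp
  also have "\<dots> = real (m choose r) * x^r"
    by (simp add: sum_distrib_left[symmetric] atMost_atLeast0[symmetric])
  finally show ?thesis .
qed

lemma choose3: "real (t choose 3) = real t * (real t - 1) * (real t - 2) / 6"
  by (simp add: binomial_gbinomial gbinomial_prod_rev eval_nat_numeral fact_numeral algebra_simps)

lemma choose4: "real (t choose 4) = real t * (real t - 1) * (real t - 2) * (real t - 3) / 24"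
  by (simp add: binomial_gbinomial gbinomial_prod_rev eval_nat_numeral fact_numeral algebra_simps)

lemma sum_k3_Bernstein: "(\<Sum>t\<le>m. real t * (real t - 1) * (real t - 2) * Bernstein m t x) = real m * (real m - 1) * (real m - 2) * x^3"
  using sum_choose_Bernstein[where m=m and r=3 and x=x] unfolding choose3
  by (simp add: sum_divide_distrib[symmetric] field_simps)

lemma sum_k4_Bernstein: "(\<Sum>t\<le>m. real t * (real t - 1) * (real t - 2) * (real t - 3) * Bernstein m t x) = real m * (real m - 1) * (real m - 2) * (real m - 3) * x^4"
  using sum_choose_Bernstein[where m=m and r=4 and x=x] unfolding choose4
  by (simp add: sum_divide_distrib[symmetric] field_simps)

lemma mom1: "(\<Sum>t\<le>m. Bernstein m t x * (real t - real m * x)) = 0"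
  by (simp add: algebra_simps sum_subtractf sum_distrib_left[symmetric] sum_distrib_right[symmetric])

lemma mom2: "(\<Sum>t\<le>m. Bernstein m t x * (real t - real m * x)^2) = real m * x * (1 - x)"
proof -
  have eq: "\<And>t. Bernstein m t x * (real t - real m * x)^2 = real t * (real t - 1) * Bernstein m t x
     + (1 - 2 * real m * x) * (real t * Bernstein m t x) + (real m * x)^2 * Bernstein m t x"
    by (simp add: power2_eq_square algebra_simps)
  then have "(\<Sum>t\<le>m. Bernstein m t x * (real t - real m * x)^2) =
     (\<Sum>t\<le>m. real t * (real t - 1) * Bernstein m t x) + (1 - 2 * real m * x) * (\<Sum>t\<le>m. real t * Bernstein m t x)
     + (real m * x)^2 * (\<Sum>t\<le>m. Bernstein m t x)"
    by (simp only: eq sum.distrib flip: sum_distrib_left)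
  also have "\<dots> = real m * x * (1 - x)" unfolding sum_kk_Bernstein sum_k_Bernstein sum_Bernstein by (simp add: power2_eq_square algebra_simps)
  finally show ?thesis .
qed

lemma mom4: "(\<Sum>t\<le>m. Bernstein m t x * (real t - real m * x)^4) =
   real m * x * (1 - x) * (1 + 3 * (real m - 2) * x * (1 - x))"
proof -
  define a where "a = real m * x"
  have eq: "\<And>t. Bernstein m t x * (real t - a)^4 =
      real t * (real t - 1) * (real t - 2) * (real t - 3) * Bernstein m t x
     + (6 - 4*a) * (real t * (real t - 1) * (real t - 2) * Bernstein m t x)
     + (7 - 12*a + 6*a^2) * (real t * (real t - 1) * Bernstein m t x)
     + (1 - 4*a + 6*a^2 - 4*a^3) * (real t * Bernstein m t x) + a^4 * Bernstein m t x"
    by algebra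
  then have "(\<Sum>t\<le>m. Bernstein m t x * (real t - a)^4) =
      (\<Sum>t\<le>m. real t * (real t - 1) * (real t - 2) * (real t - 3) * Bernstein m t x)
     + (6 - 4*a) * (\<Sum>t\<le>m. real t * (real t - 1) * (real t - 2) * Bernstein m t x)
     + (7 - 12*a + 6*a^2) * (\<Sum>t\<le>m. real t * (real t - 1) * Bernstein m t x)
     + (1 - 4*a + 6*a^2 - 4*a^3) * (\<Sum>t\<le>m. real t * Bernstein m t x) + a^4 * (\<Sum>t\<le>m. Bernstein m t x)"
    by (simp only: eq sum.distrib flip: sum_distrib_left)
  also have "\<dots> = real m * x * (1 - x) * (1 + 3 * (real m - 2) * x * (1 - x))"
    unfolding sum_k4_Bernstein sum_k3_Bernstein sum_kk_Bernstein sum_k_Bernstein sum_Bernstein a_def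
    by (simp add: power2_eq_square power4_eq_xxxx power3_eq_cube algebra_simps)
  finally show ?thesis unfolding a_def .
qed

lemma mom4_bound:
  assumes "0 \<le> x" "x \<le> 1" "m > 0"
  shows "(\<Sum>t\<le>m. Bernstein m t x * (real t / real m - x)^4) \<le> 1 / (real m)^2"
proof -
  define p where "p = x * (1 - x)"
  define M where "M = real m"
  have p0: "0 \<le> p" using assms unfolding p_def by simp
  have p1: "p \<le> 1/4" using zero_le_power2[of "x - 1/2"] unfolding p_def power2_eq_square by (simp add: algebra_simps)
  have m1: "M \<ge> 1" using assms M_def by simp
  have eq: "\<And>t. Bernstein m t x * (real t / real m - x)^4 = Bernstein m t x * (real t - real m * x)^4 / (real m)^4"
  proof -
    fix t
    have "real t / real m - x = (real t - real m * x) / real m" using assms by (simp add: field_simps)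
    then show "Bernstein m t x * (real t / real m - x)^4 = Bernstein m t x * (real t - real m * x)^4 / (real m)^4"
      by (simp add: power_divide)
  qed
  have "(\<Sum>t\<le>m. Bernstein m t x * (real t / real m - x)^4) = M * p * (1 + 3 * (M - 2) * p) / M^4"
    unfolding eq sum_divide_distrib[symmetric] mom4 p_def M_def by (simp add: algebra_simps)
  also have "\<dots> \<le> M^2 / M^4"
  proof (rule divide_right_mono)
    have "M * p * (1 + 3 * (M - 2) * p) = M * p + 3 * M^2 * p^2 - 6 * M * p^2"
      by (simp add: power2_eq_square algebra_simps)
    also have "\<dots> \<le> M * p + 3 * M^2 * p^2" using p0 m1 by simp
    also have "\<dots> \<le> M / 4 + 3 * (M^2 / 16)"
    proof -
      have "M * p \<le> M * (1/4)" using p1 m1 by (intro mult_left_mono) auto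
      moreover have "p^2 \<le> (1/4)^2" using p0 p1 by (intro power_mono) auto
      then have "M^2 * p^2 \<le> M^2 * (1/4)^2" by (intro mult_left_mono) auto
      ultimately show ?thesis by (simp add: power2_eq_square)
    qed
    also have "\<dots> \<le> M^2"
    proof -
      have "M * 1 \<le> M * M" using m1 by (intro mult_left_mono) auto
      then show ?thesis using m1 unfolding power2_eq_square by linarith
    qed
    finally show "M * p * (1 + 3 * (M - 2) * p) \<le> M^2" .
  qed simp
  also have "\<dots> = 1 / M^2" using m1 by (simp add: field_simps eval_nat_numeral)
  finally show ?thesis unfolding M_def .
qed

lemma mom2_eq:
  assumes "m > 0"
  shows "(\<Sum>t\<le>m. Bernstein m t x * (real t / real m - x)^2) = x * (1 - x) / real m"
proof -
  have eq: "\<And>t. Bernstein m t x * (real t / real m - x)^2 = Bernstein m t x * (real t - real m * x)^2 / (real m)^2"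
  proof -
    fix t
    have "real t / real m - x = (real t - real m * x) / real m" using assms by (simp add: field_simps)
    then show "Bernstein m t x * (real t / real m - x)^2 = Bernstein m t x * (real t - real m * x)^2 / (real m)^2"
      by (simp add: power_divide)
  qed
  show ?thesis unfolding eq sum_divide_distrib[symmetric] mom2 using assms by (simp add: power2_eq_square)
qed



lemma Idx_PiE: "{i::'n::finite\<Rightarrow>nat. \<forall>k. i k \<le> m} = PiE UNIV (\<lambda>_. {..m})"
  by (auto simp: PiE_def Pi_def)

lemma expect_prod:
  "(\<Sum>i\<in>{i::'n::finite\<Rightarrow>nat. \<forall>k. i k \<le> m}. \<Prod>l\<in>UNIV. Bernstein m (i l) (x$l) * h l (i l))
   = (\<Prod>l\<in>UNIV. \<Sum>t\<le>m. Bernstein m t (x$l) * h l t)"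
  by (simp add: Idx_PiE prod_sum_PiE)

lemma expect1:
  fixes x :: "real^'n::finite"
  shows "(\<Sum>i\<in>{i::'n\<Rightarrow>nat. \<forall>k. i k \<le> m}. (\<Prod>l\<in>UNIV. Bernstein m (i l) (x$l)) * \<phi> (i j))
   = (\<Sum>t\<le>m. Bernstein m t (x$j) * \<phi> t)"
proof -
  define h where "h = (\<lambda>l t. if l = j then \<phi> t else (1::real))"
  have "\<And>i. (\<Prod>l\<in>UNIV. Bernstein m (i l) (x$l)) * \<phi> (i j) = (\<Prod>l\<in>UNIV. Bernstein m (i l) (x$l) * h l (i l))"
    by (simp add: prod.distrib h_def)
  then have "(\<Sum>i\<in>{i::'n\<Rightarrow>nat. \<forall>k. i k \<le> m}. (\<Prod>l\<in>UNIV. Bernstein m (i l) (x$l)) * \<phi> (i j))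
     = (\<Prod>l\<in>UNIV. \<Sum>t\<le>m. Bernstein m t (x$l) * h l t)" by (simp add: expect_prod)
  also have "\<dots> = (\<Prod>l\<in>UNIV. if l = j then (\<Sum>t\<le>m. Bernstein m t (x$j) * \<phi> t) else 1)"
    by (rule prod.cong) (auto simp: h_def)
  also have "\<dots> = (\<Sum>t\<le>m. Bernstein m t (x$j) * \<phi> t)" by simp
  finally show ?thesis .
qed

lemma expect2:
  fixes x :: "real^'n::finite"
  assumes "j \<noteq> k"
  shows "(\<Sum>i\<in>{i::'n\<Rightarrow>nat. \<forall>k. i k \<le> m}. (\<Prod>l\<in>UNIV. Bernstein m (i l) (x$l)) * \<phi> (i j) * \<psi> (i k))
   = (\<Sum>t\<le>m. Bernstein m t (x$j) * \<phi> t) * (\<Sum>t\<le>m. Bernstein m t (x$k) * \<psi> t)"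
proof -
  define h where "h = (\<lambda>l t. (if l = j then \<phi> t else (1::real)) * (if l = k then \<psi> t else 1))"
  have "\<And>i. (\<Prod>l\<in>UNIV. Bernstein m (i l) (x$l)) * \<phi> (i j) * \<psi> (i k) = (\<Prod>l\<in>UNIV. Bernstein m (i l) (x$l) * h l (i l))"
    by (simp add: prod.distrib h_def)
  then have "(\<Sum>i\<in>{i::'n\<Rightarrow>nat. \<forall>k. i k \<le> m}. (\<Prod>l\<in>UNIV. Bernstein m (i l) (x$l)) * \<phi> (i j) * \<psi> (i k))
     = (\<Prod>l\<in>UNIV. \<Sum>t\<le>m. Bernstein m t (x$l) * h l t)" by (simp add: expect_prod)
  also have "\<dots> = (\<Prod>l\<in>UNIV. (if l = j then (\<Sum>t\<le>m. Bernstein m t (x$j) * \<phi> t) else 1)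
        * (if l = k then (\<Sum>t\<le>m. Bernstein m t (x$k) * \<psi> t) else 1))"
    by (rule prod.cong) (use assms in \<open>auto simp: h_def\<close>)
  also have "\<dots> = (\<Sum>t\<le>m. Bernstein m t (x$j) * \<phi> t) * (\<Sum>t\<le>m. Bernstein m t (x$k) * \<psi> t)"
    by (simp add: prod.distrib)
  finally show ?thesis .
qed



lemma Bernstein_deriv:
  assumes "0 < t" "t < 1"
  shows "((Bernstein m i) has_real_derivative (Bernstein m i t * (real i - real m * t) / (t*(1-t)))) (at t)"
  unfolding Bernstein_def[abs_def]
  apply (rule derivative_eq_intros refl)+
proof -
  have a: "real i * t^(i - Suc 0) * t = real i * t^i" by (cases i) auto
  have b: "real (m-i) * (1-t)^(m-i-Suc 0) * (1-t) = real (m-i) * (1-t)^(m-i)" by (cases "m-i") auto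
  have nz: "t*(1-t) \<noteq> 0" using assms by auto
  show "(0 * t ^ i + real i * (1 * t ^ (i - Suc 0)) * real (m choose i)) *
     (1 - t) ^ (m - i) +
     real (m - i) * ((0 - 1) * (1 - t) ^ (m - i - Suc 0)) *
     (real (m choose i) * t ^ i) =
     real (m choose i) * t ^ i * (1 - t) ^ (m - i) * (real i - real m * t) /
     (t * (1 - t))"
  proof (cases "i \<le> m")
    case False then show ?thesis by (simp add: binomial_eq_0)
  next
    case True
    then have c: "real (m - i) = real m - real i" by (simp add: of_nat_diff)
    define P where "P = t^i"
    define Q where "Q = t^(i - Suc 0)"
    define R where "R = (1-t)^(m-i)"
    define S where "S = (1-t)^(m-i-Suc 0)"
    define C where "C = real (m choose i)"
    have a': "real i * Q * t = real i * P" using a unfolding P_def Q_def .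
    have b': "(real m - real i) * S * (1-t) = (real m - real i) * R" using b c unfolding R_def S_def by simp
    have "((0 * P + real i * (1 * Q) * C) * R + (real m - real i) * ((0 - 1) * S) * (C * P)) * (t * (1 - t))
       = C * R * (1-t) * (real i * Q * t) - C * P * t * ((real m - real i) * S * (1-t))"
      by (simp add: algebra_simps)
    also have "\<dots> = C * P * R * (real i - real m * t)" unfolding a' b' by (simp add: algebra_simps)
    finally show ?thesis
      apply (subst eq_divide_eq)
      using nz c unfolding P_def Q_def R_def S_def C_def by simp
  qed
qed


lemma mb_deriv:
  fixes x :: "real^'n::finite" and f :: "real^'n \<Rightarrow> real"
  assumes "0 < x$k" "x$k < 1"
  shows "partial_deriv (multi_bernstein m f) k x =
    (\<Sum>i\<in>{i::'n\<Rightarrow>nat. \<forall>k. i k \<le> m}. f (\<chi> l. real (i l) / real m) * (\<Prod>l\<in>UNIV. Bernstein m (i l) (x$l))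
        * (real (i k) - real m * x$k) / (x$k * (1 - x$k)))"
proof -
  define I where "I = {i::'n\<Rightarrow>nat. \<forall>k. i k \<le> m}"
  define Bd where "Bd j = Bernstein m j (x$k) * (real j - real m * x$k) / (x$k * (1 - x$k))" for j
  have fun_eq: "(\<lambda>s. multi_bernstein m f (x + s *\<^sub>R axis k 1)) =
    (\<lambda>s. \<Sum>i\<in>I. f (\<chi> l. real (i l) / real m) * ((\<Prod>l\<in>UNIV-{k}. Bernstein m (i l) (x$l)) * Bernstein m (i k) (s + x$k)))"
  proof (rule ext)
    fix s
    show "multi_bernstein m f (x + s *\<^sub>R axis k 1) =
      (\<Sum>i\<in>I. f (\<chi> l. real (i l) / real m) * ((\<Prod>l\<in>UNIV-{k}. Bernstein m (i l) (x$l)) * Bernstein m (i k) (s + x$k)))"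
      unfolding multi_bernstein_def I_def
    proof (rule sum.cong[OF refl])
      fix i :: "'n \<Rightarrow> nat"
      have "(\<Prod>l\<in>UNIV. Bernstein m (i l) ((x + s *\<^sub>R axis k 1) $ l)) =
         Bernstein m (i k) ((x + s *\<^sub>R axis k 1) $ k) * (\<Prod>l\<in>UNIV-{k}. Bernstein m (i l) ((x + s *\<^sub>R axis k 1) $ l))"
        by (rule prod.remove) auto
      also have "\<dots> = Bernstein m (i k) (s + x$k) * (\<Prod>l\<in>UNIV-{k}. Bernstein m (i l) (x$l))"
        by (auto simp: axis_def add.commute intro!: prod.cong)
      finally show "f (\<chi> l. real (i l) / real m) * (\<Prod>l\<in>UNIV. Bernstein m (i l) ((x + s *\<^sub>R axis k 1) $ l)) =
        f (\<chi> l. real (i l) / real m) * ((\<Prod>l\<in>UNIV-{k}. Bernstein m (i l) (x$l)) * Bernstein m (i k) (s + x$k))"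
        by simp
    qed
  qed
  have Bs: "((\<lambda>s. Bernstein m j (s + x$k)) has_real_derivative Bd j) (at 0)" for j
    using Bernstein_deriv[of "x$k" m j] assms DERIV_shift[of "Bernstein m j" "Bd j" 0 "x$k"]
    by (simp add: Bd_def)
  have D: "((\<lambda>s. multi_bernstein m f (x + s *\<^sub>R axis k 1)) has_real_derivative
     (\<Sum>i\<in>I. f (\<chi> l. real (i l) / real m) * ((\<Prod>l\<in>UNIV-{k}. Bernstein m (i l) (x$l)) * Bd (i k)))) (at 0)"
    unfolding fun_eq
    by (intro DERIV_sum DERIV_cmult Bs)
  have "partial_deriv (multi_bernstein m f) k x =
     (\<Sum>i\<in>I. f (\<chi> l. real (i l) / real m) * ((\<Prod>l\<in>UNIV-{k}. Bernstein m (i l) (x$l)) * Bd (i k)))"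
    unfolding partial_deriv_def using D by (rule DERIV_imp_deriv)
  also have "\<dots> = (\<Sum>i\<in>I. f (\<chi> l. real (i l) / real m) * (\<Prod>l\<in>UNIV. Bernstein m (i l) (x$l))
        * (real (i k) - real m * x$k) / (x$k * (1 - x$k)))"
  proof (rule sum.cong[OF refl])
    fix i :: "'n \<Rightarrow> nat"
    have "(\<Prod>l\<in>UNIV. Bernstein m (i l) (x$l)) = Bernstein m (i k) (x$k) * (\<Prod>l\<in>UNIV-{k}. Bernstein m (i l) (x$l))"
      by (rule prod.remove) auto
    then show "f (\<chi> l. real (i l) / real m) * ((\<Prod>l\<in>UNIV-{k}. Bernstein m (i l) (x$l)) * Bd (i k)) =
      f (\<chi> l. real (i l) / real m) * (\<Prod>l\<in>UNIV. Bernstein m (i l) (x$l))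
        * (real (i k) - real m * x$k) / (x$k * (1 - x$k))"
      by (simp add: Bd_def)
  qed
  finally show ?thesis unfolding I_def .
qed



lemma pointwise_bound:
  fixes x :: "real^'n::finite" and g :: "real^'n \<Rightarrow> real" and i :: "'n \<Rightarrow> nat"
  assumes x01: "\<forall>j. 0 < x $ j \<and> x $ j < 1" and m: "m > 0" and i: "\<forall>l. i l \<le> m"
    and e: "\<epsilon> \<ge> 0" and d: "\<delta> > 0" and G: "G \<ge> 0"
    and near: "\<forall>y. norm (y - x) < \<delta> \<longrightarrow> \<bar>g y\<bar> \<le> \<epsilon> * norm (y - x)"
    and far: "\<forall>y. (\<forall>j. 0 \<le> y$j \<and> y$j \<le> 1) \<longrightarrow> \<bar>g y\<bar> \<le> G"
  shows "\<bar>g (\<chi> l. real (i l) / real m)\<bar> * \<bar>real (i k) - real m * x$k\<bar> \<le>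
     real m * (\<epsilon> * (\<Sum>j\<in>UNIV. (real (i j) / real m - x$j)^2 + (real (i k) / real m - x$k)^2)
       + G * (real CARD('n) / \<delta>)^4 * (\<Sum>j\<in>UNIV. (real (i j) / real m - x$j)^4))"
proof -
  define y where "y = (\<chi> l. real (i l) / real m)"
  define dd where "dd j = real (i j) / real m - x$j" for j
  define n where "n = real CARD('n)"
  have n0: "n > 0" unfolding n_def by simp
  have yx: "(y - x) $ j = dd j" for j unfolding y_def dd_def by simp
  have ycube: "\<forall>j. 0 \<le> y$j \<and> y$j \<le> 1" using i m unfolding y_def by auto
  have ddk: "\<bar>dd k\<bar> \<le> 1"
  proof -
    have "dd k = y$k - x$k" using yx[of k] by simp
    moreover have "0 \<le> y$k" "y$k \<le> 1" "0 < x$k" "x$k < 1" using ycube x01 by auto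
    ultimately show ?thesis by (simp add: abs_le_iff)
  qed
  have mk: "\<bar>real (i k) - real m * x$k\<bar> = real m * \<bar>dd k\<bar>"
  proof -
    have "real (i k) - real m * x$k = real m * dd k" using m unfolding dd_def by (simp add: field_simps)
    then show ?thesis using m by (simp add: abs_mult)
  qed
  define A where "A = \<epsilon> * (\<Sum>j\<in>UNIV. (dd j)^2 + (dd k)^2)"
  define B where "B = G * (n / \<delta>)^4 * (\<Sum>j\<in>UNIV. (dd j)^4)"
  have A0: "A \<ge> 0" unfolding A_def using e by (intro mult_nonneg_nonneg sum_nonneg) auto
  have B0: "B \<ge> 0" unfolding B_def using G n0 d by (intro mult_nonneg_nonneg sum_nonneg) auto
  have main: "\<bar>g y\<bar> * \<bar>dd k\<bar> \<le> A + B"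
  proof (cases "norm (y - x) < \<delta>")
    case True
    have "\<bar>g y\<bar> * \<bar>dd k\<bar> \<le> \<epsilon> * norm (y - x) * \<bar>dd k\<bar>"
      using near True by (intro mult_right_mono) auto
    also have "\<dots> \<le> \<epsilon> * (\<Sum>j\<in>UNIV. \<bar>dd j\<bar>) * \<bar>dd k\<bar>"
      using norm_le_l1_cart[of "y - x"] e unfolding yx by (intro mult_right_mono mult_left_mono) auto
    also have "\<dots> = \<epsilon> * (\<Sum>j\<in>UNIV. \<bar>dd j\<bar> * \<bar>dd k\<bar>)" by (simp add: sum_distrib_right mult.assoc)
    also have "\<dots> \<le> A" unfolding A_def
    proof (intro mult_left_mono e sum_mono)
      fix j
      have "0 \<le> (\<bar>dd j\<bar> - \<bar>dd k\<bar>)^2" by simp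
      then have "2 * (\<bar>dd j\<bar> * \<bar>dd k\<bar>) \<le> \<bar>dd j\<bar>^2 + \<bar>dd k\<bar>^2"
        by (simp add: power2_eq_square algebra_simps)
      moreover have "0 \<le> \<bar>dd j\<bar> * \<bar>dd k\<bar>" by simp
      ultimately show "\<bar>dd j\<bar> * \<bar>dd k\<bar> \<le> (dd j)^2 + (dd k)^2" by (simp only: power2_abs)
    qed
    finally show ?thesis using B0 by simp
  next
    case False
    then have "\<delta> \<le> (\<Sum>j\<in>UNIV. \<bar>dd j\<bar>)" using norm_le_l1_cart[of "y - x"] unfolding yx by simp
    then obtain j where j: "\<delta> / n \<le> \<bar>dd j\<bar>"
    proof -
      assume *: "\<And>j. \<delta> / n \<le> \<bar>dd j\<bar> \<Longrightarrow> thesis"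
      show thesis
      proof (rule ccontr)
        assume "\<not> thesis"
        then have "\<And>j. \<bar>dd j\<bar> < \<delta> / n" using * not_le by blast
        then have "(\<Sum>j\<in>UNIV. \<bar>dd j\<bar>) < of_nat (card (UNIV::'n set)) * (\<delta> / n)"
          by (intro sum_bounded_above_strict) auto
        also have "\<dots> = \<delta>" using n0 unfolding n_def by simp
        finally show False using \<open>\<delta> \<le> _\<close> by simp
      qed
    qed
    have "(\<delta> / n)^4 \<le> \<bar>dd j\<bar>^4" using j d n0 by (intro power_mono) auto
    then have "(\<delta> / n)^4 \<le> (dd j)^4" by (simp add: power_even_abs_numeral)
    then have "1 \<le> (n / \<delta>)^4 * (dd j)^4"
      using d n0 by (simp add: power_divide field_simps)
    also have "\<dots> \<le> (n / \<delta>)^4 * (\<Sum>j\<in>UNIV. (dd j)^4)"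
      by (intro mult_left_mono member_le_sum) auto
    finally have one: "1 \<le> (n / \<delta>)^4 * (\<Sum>j\<in>UNIV. (dd j)^4)" .
    have "\<bar>g y\<bar> * \<bar>dd k\<bar> \<le> G * 1"
      using far ycube ddk G by (intro mult_mono) auto
    also have "\<dots> \<le> B" unfolding B_def mult.assoc using one G by (intro mult_left_mono)
    finally show ?thesis using A0 by simp
  qed
  have "\<bar>g y\<bar> * (real m * \<bar>dd k\<bar>) = real m * (\<bar>g y\<bar> * \<bar>dd k\<bar>)" by simp
  also have "\<dots> \<le> real m * (A + B)" using main by (intro mult_left_mono) auto
  finally show ?thesis
    unfolding mk y_def[symmetric] dd_def[symmetric] n_def[symmetric] A_def B_def .
qed


lemma Dg_bound:
  fixes x :: "real^'n::finite" and g :: "real^'n \<Rightarrow> real"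
  assumes x01: "\<forall>j. 0 < x $ j \<and> x $ j < 1" and m: "m > 0"
    and e: "\<epsilon> \<ge> 0" and d: "\<delta> > 0" and G: "G \<ge> 0"
    and near: "\<forall>y. norm (y - x) < \<delta> \<longrightarrow> \<bar>g y\<bar> \<le> \<epsilon> * norm (y - x)"
    and far: "\<forall>y. (\<forall>j. 0 \<le> y$j \<and> y$j \<le> 1) \<longrightarrow> \<bar>g y\<bar> \<le> G"
  shows "\<bar>\<Sum>i\<in>{i::'n\<Rightarrow>nat. \<forall>k. i k \<le> m}. g (\<chi> l. real (i l) / real m) * (\<Prod>l\<in>UNIV. Bernstein m (i l) (x$l))
        * (real (i k) - real m * x$k) / (x$k * (1 - x$k))\<bar>
     \<le> (2 * real CARD('n) * \<epsilon> + G * (real CARD('n) / \<delta>)^4 * real CARD('n) / real m) / (x$k * (1 - x$k))"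
proof -
  define I where "I = {i::'n\<Rightarrow>nat. \<forall>k. i k \<le> m}"
  have finI: "finite I" unfolding I_def Idx_PiE by (simp add: finite_PiE)
  define c where "c = x$k * (1 - x$k)"
  have c0: "c > 0" using x01 unfolding c_def by simp
  define Bw where "Bw i = (\<Prod>l\<in>UNIV. Bernstein m (i l) (x$l))" for i :: "'n \<Rightarrow> nat"
  have Bw0: "Bw i \<ge> 0" for i unfolding Bw_def using x01 by (intro prod_nonneg Bernstein_nonneg) (auto simp: less_imp_le)
  define K where "K = (real CARD('n) / \<delta>)^4"
  define dd where "dd i j = real (i j) / real m - x$j" for i :: "'n \<Rightarrow> nat" and j
  define \<Phi> where "\<Phi> i = (\<Sum>j\<in>UNIV. \<epsilon> * (dd i j)^2 + \<epsilon> * (dd i k)^2 + G * K * (dd i j)^4)" for i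
  have pw: "\<bar>g (\<chi> l. real (i l) / real m)\<bar> * \<bar>real (i k) - real m * x$k\<bar> \<le> real m * \<Phi> i" if "i \<in> I" for i
  proof -
    have "\<Phi> i = \<epsilon> * (\<Sum>j\<in>UNIV. (dd i j)^2 + (dd i k)^2) + G * K * (\<Sum>j\<in>UNIV. (dd i j)^4)"
      unfolding \<Phi>_def by (simp add: sum.distrib sum_distrib_left algebra_simps)
    then show ?thesis
      using pointwise_bound[OF x01 m _ e d G near far, of i k] that unfolding I_def dd_def K_def by simp
  qed
  have Sb: "(\<Sum>i\<in>I. Bw i * \<Phi> i) \<le> real CARD('n) * (2 * \<epsilon> / real m + G * K / (real m)^2)"
  proof -
  have "(\<Sum>i\<in>I. Bw i * \<Phi> i) = (\<Sum>j\<in>UNIV. \<epsilon> * (\<Sum>i\<in>I. Bw i * (dd i j)^2) + \<epsilon> * (\<Sum>i\<in>I. Bw i * (dd i k)^2)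
        + G * K * (\<Sum>i\<in>I. Bw i * (dd i j)^4))"
    unfolding \<Phi>_def sum_distrib_left
    by (subst sum.swap) (simp add: sum.distrib sum_distrib_left algebra_simps)
  also have "\<dots> \<le> (\<Sum>j\<in>(UNIV::'n set). \<epsilon> * (1 / real m) + \<epsilon> * (1 / real m) + G * K * (1 / (real m)^2))"
  proof (rule sum_mono)
    fix j :: 'n
    have m2: "(\<Sum>i\<in>I. Bw i * (dd i j)^2) \<le> 1 / real m" for j
    proof -
      have "(\<Sum>i\<in>I. Bw i * (dd i j)^2) = x$j * (1 - x$j) / real m"
        unfolding I_def Bw_def dd_def expect1[where \<phi>="\<lambda>t. (real t / real m - x$j)^2"] mom2_eq[OF m] ..
      also have "\<dots> \<le> 1 / real m"
      proof -
        have "x$j * (1 - x$j) \<le> 1 * 1" using x01[rule_format, of j] by (intro mult_mono) auto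
        then show ?thesis using m by (intro divide_right_mono) auto
      qed
      finally show ?thesis .
    qed
    have m4: "(\<Sum>i\<in>I. Bw i * (dd i j)^4) \<le> 1 / (real m)^2"
      unfolding I_def Bw_def dd_def expect1[where \<phi>="\<lambda>t. (real t / real m - x$j)^4"]
      using mom4_bound[OF _ _ m, of "x$j"] x01[rule_format, of j] by simp
    show "\<epsilon> * (\<Sum>i\<in>I. Bw i * (dd i j)^2) + \<epsilon> * (\<Sum>i\<in>I. Bw i * (dd i k)^2) + G * K * (\<Sum>i\<in>I. Bw i * (dd i j)^4)
       \<le> \<epsilon> * (1 / real m) + \<epsilon> * (1 / real m) + G * K * (1 / (real m)^2)"
      using m2[of j] m2[of k] m4 e G unfolding K_def
      by (intro add_mono mult_left_mono) auto
  qed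
  also have "\<dots> = real CARD('n) * (2 * \<epsilon> / real m + G * K / (real m)^2)" by simp
  finally show ?thesis .
  qed
  have "\<bar>\<Sum>i\<in>I. g (\<chi> l. real (i l) / real m) * Bw i * (real (i k) - real m * x$k) / c\<bar>
      \<le> (\<Sum>i\<in>I. \<bar>g (\<chi> l. real (i l) / real m) * Bw i * (real (i k) - real m * x$k) / c\<bar>)"
    by (rule sum_abs)
  also have "\<dots> \<le> (\<Sum>i\<in>I. Bw i * (real m * \<Phi> i) / c)"
  proof (rule sum_mono)
    fix i assume "i \<in> I"
    have "\<bar>g (\<chi> l. real (i l) / real m) * Bw i * (real (i k) - real m * x$k) / c\<bar>
       = Bw i * (\<bar>g (\<chi> l. real (i l) / real m)\<bar> * \<bar>real (i k) - real m * x$k\<bar>) / c"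
      using Bw0[of i] c0 by (simp add: abs_mult)
    also have "\<dots> \<le> Bw i * (real m * \<Phi> i) / c"
      using pw[OF \<open>i \<in> I\<close>] Bw0[of i] c0 by (intro divide_right_mono mult_left_mono) auto
    finally show "\<bar>g (\<chi> l. real (i l) / real m) * Bw i * (real (i k) - real m * x$k) / c\<bar> \<le> Bw i * (real m * \<Phi> i) / c" .
  qed
  also have "\<dots> = real m / c * (\<Sum>i\<in>I. Bw i * \<Phi> i)"
    by (simp add: sum_distrib_left sum_divide_distrib algebra_simps)
  also have "\<dots> \<le> real m / c * (real CARD('n) * (2 * \<epsilon> / real m + G * K / (real m)^2))"
    using c0 m by (intro mult_left_mono[OF Sb]) auto
  also have "\<dots> = (2 * real CARD('n) * \<epsilon> + G * K * real CARD('n) / real m) / c"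
    using m c0 by (simp add: field_simps power2_eq_square)
  finally show ?thesis unfolding I_def Bw_def c_def K_def .
qed



theorem mainTheorem8:
  fixes f :: "real^'n::finite \<Rightarrow> real" and x :: "real^'n" and k :: 'n
  assumes "bounded (f ` {y. \<forall>j. 0 \<le> y $ j \<and> y $ j \<le> 1})"
    and "\<forall>j. 0 < x $ j \<and> x $ j < 1"
    and "f differentiable (at x)"
  shows "(\<lambda>m. partial_deriv (multi_bernstein m f) k x) \<longlonglongrightarrow> partial_deriv f k x"
proof -
  note x01 = assms(2)
  obtain L where L: "(f has_derivative L) (at x)" using assms(3) unfolding differentiable_def by blast
  have bl: "bounded_linear L" using L by (rule has_derivative_bounded_linear)
  have lin: "linear L" using bl by (rule bounded_linear.linear)
  have xk: "0 < x$k" "x$k < 1" using x01 by auto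
  define c where "c = x$k * (1 - x$k)"
  have c0: "c > 0" using xk unfolding c_def by simp
  define n where "n = real CARD('n)"
  have n0: "n > 0" unfolding n_def by simp
  define I where "I m = {i::'n\<Rightarrow>nat. \<forall>k. i k \<le> m}" for m
  define Bw where "Bw m i = (\<Prod>l\<in>UNIV. Bernstein m (i l) (x$l))" for m and i :: "'n \<Rightarrow> nat"
  define nd where "nd m i = (\<chi> l. real (i l) / real m :: real^'n)" for m and i :: "'n \<Rightarrow> nat"
  have pf: "partial_deriv f k x = L (axis k 1)"
  proof -
    have h1: "((\<lambda>t::real. x + t *\<^sub>R axis k 1) has_derivative (\<lambda>t. t *\<^sub>R axis k 1)) (at 0)"
      by (auto intro!: derivative_eq_intros)
    have h2: "(f has_derivative L) (at ((\<lambda>t::real. x + t *\<^sub>R axis k 1) 0))" using L by simp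
    have "((f \<circ> (\<lambda>t::real. x + t *\<^sub>R axis k 1)) has_derivative (L \<circ> (\<lambda>t. t *\<^sub>R axis k 1))) (at 0)"
      by (rule diff_chain_at[OF h1 h2])
    moreover have "L \<circ> (\<lambda>t. t *\<^sub>R axis k 1) = (*) (L (axis k 1))"
      by (rule ext) (simp add: linear_scale[OF lin])
    ultimately have "((\<lambda>t. f (x + t *\<^sub>R axis k 1)) has_real_derivative L (axis k 1)) (at 0)"
      unfolding has_field_derivative_def by (simp add: comp_def)
    then show ?thesis unfolding partial_deriv_def by (rule DERIV_imp_deriv)
  qed
  define g where "g y = f y - f x - L (y - x)" for y
  have dec: "partial_deriv (multi_bernstein m f) k x =
     (\<Sum>i\<in>I m. g (nd m i) * Bw m i * (real (i k) - real m * x$k) / c) + L (axis k 1)" if m: "m > 0" for m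
  proof -
    have md: "partial_deriv (multi_bernstein m f) k x = (\<Sum>i\<in>I m. f (nd m i) * Bw m i * (real (i k) - real m * x$k) / c)"
      using mb_deriv[OF xk, of m f] unfolding I_def nd_def Bw_def c_def .
    have S1: "(\<Sum>i\<in>I m. Bw m i * (real (i k) - real m * x$k)) = 0"
      unfolding I_def Bw_def expect1[where \<phi>="\<lambda>t. real t - real m * x$k"] by (rule mom1)
    define W where "W i = Bw m i * (real (i k) - real m * x$k) / c" for i
    have V: "(\<Sum>i\<in>I m. W i *\<^sub>R (nd m i - x)) = axis k 1"
    proof (subst vec_eq_iff, intro allI)
      fix j
      show "(\<Sum>i\<in>I m. W i *\<^sub>R (nd m i - x)) $ j = axis k 1 $ j"
      proof (cases "j = k")
        case True
        have "(\<Sum>i\<in>I m. W i *\<^sub>R (nd m i - x)) $ j =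
           (\<Sum>i\<in>I m. Bw m i * ((real (i k) - real m * x$k) / c * (real (i k) / real m - x$k)))"
          unfolding True W_def nd_def sum_component by (intro sum.cong refl) (simp add: mult.assoc)
        also have "\<dots> = (\<Sum>t\<le>m. Bernstein m t (x$k) * ((real t - real m * x$k) / c * (real t / real m - x$k)))"
          unfolding I_def Bw_def by (rule expect1)
        also have "\<dots> = (\<Sum>t\<le>m. Bernstein m t (x$k) * (real t - real m * x$k)^2) / (real m * c)"
          unfolding sum_divide_distrib
        proof (rule sum.cong[OF refl])
          fix t
          have "real t / real m - x$k = (real t - real m * x$k) / real m" using m by (simp add: field_simps)
          then show "Bernstein m t (x$k) * ((real t - real m * x$k) / c * (real t / real m - x$k)) =
             Bernstein m t (x$k) * (real t - real m * x$k)^2 / (real m * c)"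
            by (simp add: power2_eq_square)
        qed
        also have "\<dots> = 1" unfolding mom2 c_def using m xk by simp
        finally show ?thesis using True by (simp add: axis_def)
      next
        case False
        have "(\<Sum>i\<in>I m. W i *\<^sub>R (nd m i - x)) $ j =
           (\<Sum>i\<in>I m. Bw m i * (real (i j) / real m - x$j) * ((real (i k) - real m * x$k) / c))"
          unfolding W_def nd_def sum_component by (intro sum.cong refl) (simp add: mult.assoc mult.commute mult.left_commute)
        also have "\<dots> = (\<Sum>t\<le>m. Bernstein m t (x$j) * (real t / real m - x$j)) *
            (\<Sum>t\<le>m. Bernstein m t (x$k) * ((real t - real m * x$k) / c))"
          unfolding I_def Bw_def by (rule expect2[OF False])
        also have "(\<Sum>t\<le>m. Bernstein m t (x$k) * ((real t - real m * x$k) / c)) = 0"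
          using mom1[of m "x$k"] by (simp add: sum_divide_distrib[symmetric])
        finally show ?thesis using False by (simp add: axis_def)
      qed
    qed
    have "(\<Sum>i\<in>I m. f (nd m i) * Bw m i * (real (i k) - real m * x$k) / c) =
       (\<Sum>i\<in>I m. g (nd m i) * Bw m i * (real (i k) - real m * x$k) / c)
       + f x / c * (\<Sum>i\<in>I m. Bw m i * (real (i k) - real m * x$k))
       + (\<Sum>i\<in>I m. W i * L (nd m i - x))"
    proof -
      have "(\<Sum>i\<in>I m. f (nd m i) * Bw m i * (real (i k) - real m * x$k) / c) =
        (\<Sum>i\<in>I m. g (nd m i) * Bw m i * (real (i k) - real m * x$k) / c
          + f x / c * (Bw m i * (real (i k) - real m * x$k)) + W i * L (nd m i - x))"
        using c0 by (intro sum.cong refl) (simp add: g_def W_def field_simps)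
      then show ?thesis by (simp only: sum.distrib sum_distrib_left)
    qed
    also have "(\<Sum>i\<in>I m. W i * L (nd m i - x)) = L (axis k 1)"
      unfolding V[symmetric] linear_sum[OF lin] linear_scale[OF lin] by simp
    finally show ?thesis unfolding md S1 by simp
  qed
  obtain Mf where Mf: "\<forall>y\<in>f ` {y. \<forall>j. 0 \<le> y $ j \<and> y $ j \<le> 1}. norm y \<le> Mf"
    using assms(1) unfolding bounded_iff by blast
  obtain BL where BL: "BL > 0" "\<forall>v. norm (L v) \<le> norm v * BL"
    using bounded_linear.pos_bounded[OF bl] by blast
  define G where "G = 2 * Mf + n * BL"
  have gfar: "\<forall>y. (\<forall>j. 0 \<le> y$j \<and> y$j \<le> 1) \<longrightarrow> \<bar>g y\<bar> \<le> G"
  proof (intro allI impI)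
    fix y :: "real^'n" assume y: "\<forall>j. 0 \<le> y$j \<and> y$j \<le> 1"
    have fy: "\<bar>f y\<bar> \<le> Mf" using Mf y by auto
    have fx: "\<bar>f x\<bar> \<le> Mf" using Mf x01 by (auto simp: less_imp_le)
    have "norm (y - x) \<le> (\<Sum>j\<in>UNIV. \<bar>(y - x)$j\<bar>)" by (rule norm_le_l1_cart)
    also have "\<dots> \<le> (\<Sum>j\<in>(UNIV::'n set). 1)"
    proof (rule sum_mono)
      fix j
      show "\<bar>(y - x)$j\<bar> \<le> 1" using y[rule_format, of j] x01[rule_format, of j] by (simp add: abs_le_iff)
    qed
    also have "\<dots> = n" unfolding n_def by simp
    finally have "norm (y - x) \<le> n" .
    then have "\<bar>L (y - x)\<bar> \<le> n * BL" using BL by (smt (verit) mult_right_mono real_norm_def)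
    then show "\<bar>g y\<bar> \<le> G" unfolding g_def G_def using fy fx by linarith
  qed
  have G0: "G \<ge> 0" using gfar[rule_format, of x] x01 by (auto simp: less_imp_le)
  have near: "\<forall>e>0. \<exists>d>0. \<forall>y. norm (y - x) < d \<longrightarrow> \<bar>g y\<bar> \<le> e * norm (y - x)"
    using L unfolding has_derivative_at_alt g_def by simp
  show ?thesis
    unfolding pf LIMSEQ_iff
  proof (intro allI impI)
    fix r :: real assume r: "r > 0"
    define \<epsilon> where "\<epsilon> = r * c / (4 * n)"
    have e0: "\<epsilon> > 0" unfolding \<epsilon>_def using r c0 n0 by simp
    obtain \<delta> where d: "\<delta> > 0" and dnear: "\<forall>y. norm (y - x) < \<delta> \<longrightarrow> \<bar>g y\<bar> \<le> \<epsilon> * norm (y - x)"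
      using near e0 by blast
    define K where "K = (n / \<delta>)^4"
    define N where "N = nat \<lceil>4 * G * K * n / (r * c)\<rceil> + 1"
    show "\<exists>no. \<forall>m\<ge>no. norm (partial_deriv (multi_bernstein m f) k x - L (axis k 1)) < r"
    proof (intro exI allI impI)
      fix m assume mN: "N \<le> m"
      then have m: "m > 0" unfolding N_def by simp
      have "norm (partial_deriv (multi_bernstein m f) k x - L (axis k 1)) =
         \<bar>\<Sum>i\<in>I m. g (nd m i) * Bw m i * (real (i k) - real m * x$k) / c\<bar>"
        using dec[OF m] by simp
      also have "\<dots> \<le> (2 * n * \<epsilon> + G * K * n / real m) / c"
        using Dg_bound[OF x01 m less_imp_le[OF e0] d G0 dnear gfar, of k]
        unfolding I_def nd_def Bw_def c_def K_def n_def .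
      also have "\<dots> < r"
      proof -
        have "4 * G * K * n / (r * c) < real m"
          using mN unfolding N_def by linarith
        then have "G * K * n / real m < r * c / 4"
          using r c0 m by (simp add: field_simps)
        moreover have "2 * n * \<epsilon> = r * c / 2" unfolding \<epsilon>_def using n0 by simp
        moreover have "r * c > 0" using r c0 by simp
        ultimately have "2 * n * \<epsilon> + G * K * n / real m < r * c" by linarith
        then show ?thesis using c0 by (simp add: field_simps)
      qed
      finally show "norm (partial_deriv (multi_bernstein m f) k x - L (axis k 1)) < r" .
    qed
  qed
qed

end
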